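(* Let $X$ be a topological space possessing an infinite metrizable gauge, let $\kappa$ be a regular cardinal with $\kappa\in\mathrm{MG}(X)$, and let $G\in\mathcal{G}_\kappa$. If $X$ is finally $\kappa$-compact, then $(X,d)$ is complete for every $d\in\mathrm{Met}(X;G)$.
   Context: A linearly ordered Abelian group is an Abelian group with a linear order compatible with addition. For $x,y\in G_{>0}$, $x\asymp y$ iff $y\le nx$ and $x\le my$ for some $n,m\in\mathbb{Z}_{\ge1}$; $\mathrm{Arc}(G)=G_{>0}/\asymp$, ordered by $[x]\preceq[y]$ iff ($nx<y$ for all $n$) or $x\asymp y$; $\mathrm{Arc}(G)^\perp$ is $\mathrm{Arc}(G)$ with a new least element adjoined. For a bottomed linearly ordered set $S$ (least element $\perp_S$, $S^*=S\setminus\{\perp_S\}$), $\chi(S)$ is the least cardinal $\kappa>0$ such that some strictly decreasing family $(s_\alpha)_{\alpha<\kappa}$ in $S^*$ has every $t\in S^*$ bounded below by some $s_\alpha$. A $G$-metric: $d\colon X^2\to G$, $d(x,y)=0\iff x=y$, $d\ge0$, symmetric, triangle inequality; $\mathrm{Met}(X;G)$ is the set of $G$-metrics generating the topology of $X$ via open balls of radii in $G_{>0}$. $\mathrm{MG}(X)$: cardinals $\kappa$ with some $G$, $\chi(\mathrm{Arc}(G)^\perp)=\kappa$, $\mathrm{Met}(X;G)\ne\emptyset$; infinite metrizable gauge: some $\kappa\in\mathrm{MG}(X)$ with $\kappa\ge\omega_0$. $\mathcal{G}_\kappa$: groups with $\chi(\mathrm{Arc}(G)^\perp)=\kappa$.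 A filter $\mathcal F$ is Cauchy for $d$ if for every $\epsilon\in G_{>0}$ some $F\in\mathcal F$ has $d(x,y)<\epsilon$ for all $x,y\in F$; $(X,d)$ is complete if every Cauchy filter converges. $X$ is finally $\kappa$-compact if every open cover has a subcover of cardinality $<\kappa$. *)

theory Defs
  imports "HOL-Analysis.Analysis"
begin

definition arch_eq :: "'g::linordered_ab_group_add \<Rightarrow> 'g \<Rightarrow> bool" where
  "arch_eq x y \<longleftrightarrow> 0 < x \<and> 0 < y \<and>
     (\<exists>n::nat. n \<ge> 1 \<and> y \<le> (\<Sum>i<n. x)) \<and> (\<exists>m::nat. m \<ge> 1 \<and> x \<le> (\<Sum>i<m. y))"

definition arc_class :: "'g::linordered_ab_group_add \<Rightarrow> 'g set" where
  "arc_class x = {y. arch_eq x y}"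

definition Arc :: "'g::linordered_ab_group_add set set" where
  "Arc = {arc_class x | x. 0 < x}"

definition arc_le :: "'g::linordered_ab_group_add set \<Rightarrow> 'g set \<Rightarrow> bool" where
  "arc_le A B \<longleftrightarrow> (\<exists>x y. 0 < x \<and> 0 < y \<and> A = arc_class x \<and> B = arc_class y \<and>
      ((\<forall>n::nat. (\<Sum>i<n. x) < y) \<or> arch_eq x y))"

text \<open>For a bottomed set S with S* = S - {bot}, \<chi>(S) depends only on (S*, \<le>).
  A family indexed by the well-order (cardinal) k, strictly decreasing, coinitial in S*.\<close>
definition coinitial_family :: "'a set \<Rightarrow> ('a \<Rightarrow> 'a \<Rightarrow> bool) \<Rightarrow> 'c rel \<Rightarrow> bool" where
  "coinitial_family Sst le k \<longleftrightarrow> (\<exists>s::'c \<Rightarrow> 'a.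
      s ` Field k \<subseteq> Sst \<and>
      (\<forall>\<alpha> \<beta>. (\<alpha>, \<beta>) \<in> k \<and> \<alpha> \<noteq> \<beta> \<longrightarrow> le (s \<beta>) (s \<alpha>) \<and> s \<beta> \<noteq> s \<alpha>) \<and>
      (\<forall>t\<in>Sst. \<exists>\<alpha>\<in>Field k. le (s \<alpha>) t))"

definition chi_is :: "'a set \<Rightarrow> ('a \<Rightarrow> 'a \<Rightarrow> bool) \<Rightarrow> 'c rel \<Rightarrow> bool" where
  "chi_is Sst le k \<longleftrightarrow> Card_order k \<and> Field k \<noteq> {} \<and> coinitial_family Sst le k \<and>
     (\<forall>l::'c rel. Card_order l \<and> Field l \<noteq> {} \<and> coinitial_family Sst le l \<longrightarrow> (k, l) \<in> ordLeq)"

definition chi_Arc_is :: "'g::linordered_ab_group_add itself \<Rightarrow> 'c rel \<Rightarrow> bool" where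
  "chi_Arc_is _ k \<longleftrightarrow> chi_is (Arc :: 'g set set) arc_le k"

definition G_metric :: "'x set \<Rightarrow> ('x \<Rightarrow> 'x \<Rightarrow> 'g::linordered_ab_group_add) \<Rightarrow> bool" where
  "G_metric S d \<longleftrightarrow>
     (\<forall>x\<in>S. \<forall>y\<in>S. (d x y = 0 \<longleftrightarrow> x = y) \<and> 0 \<le> d x y \<and> d x y = d y x) \<and>
     (\<forall>x\<in>S. \<forall>y\<in>S. \<forall>z\<in>S. d x z \<le> d x y + d y z)"

definition Gball :: "'x set \<Rightarrow> ('x \<Rightarrow> 'x \<Rightarrow> 'g::linordered_ab_group_add) \<Rightarrow> 'x \<Rightarrow> 'g \<Rightarrow> 'x set" where
  "Gball S d x e = {y\<in>S. d x y < e}"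

definition Met :: "'x topology \<Rightarrow> ('x \<Rightarrow> 'x \<Rightarrow> 'g::linordered_ab_group_add) set" where
  "Met X = {d. G_metric (topspace X) d \<and>
     (\<forall>U. openin X U \<longleftrightarrow> U \<subseteq> topspace X \<and>
        (\<forall>x\<in>U. \<exists>e>0. Gball (topspace X) d x e \<subseteq> U))}"

definition Cauchy_filter :: "'x topology \<Rightarrow> ('x \<Rightarrow> 'x \<Rightarrow> 'g::linordered_ab_group_add) \<Rightarrow> 'x filter \<Rightarrow> bool" where
  "Cauchy_filter X d F \<longleftrightarrow> F \<noteq> bot \<and> F \<le> principal (topspace X) \<and>
     (\<forall>e>0. \<exists>A. eventually (\<lambda>x. x \<in> A) F \<and> (\<forall>x\<in>A. \<forall>y\<in>A. d x y < e))"

definition G_complete :: "'x topology \<Rightarrow> ('x \<Rightarrow> 'x \<Rightarrow> 'g::linordered_ab_group_add) \<Rightarrow> bool" where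
  "G_complete X d \<longleftrightarrow> (\<forall>F. Cauchy_filter X d F \<longrightarrow> (\<exists>x. limitin X id x F))"

definition finally_compact :: "'x topology \<Rightarrow> 'c rel \<Rightarrow> bool" where
  "finally_compact X k \<longleftrightarrow> (\<forall>\<U>. (\<forall>U\<in>\<U>. openin X U) \<and> topspace X \<subseteq> \<Union>\<U> \<longrightarrow>
      (\<exists>\<V>\<subseteq>\<U>. topspace X \<subseteq> \<Union>\<V> \<and> (card_of \<V>, k) \<in> ordLess))"

end

theory Submission imports Defs begin
unbundle cardinal_syntax

lemma bound_above:
  assumes cr: "Card_order r" and inf: "infinite (Field r)" and reg: "regularCard r"
    and K: "K \<subseteq> Field r" and lt: "|K| <o r"
  shows "\<exists>b\<in>Field r. \<forall>k\<in>K. (k,b) \<in> r \<and> k \<noteq> b"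
proof -
  have r: "wo_rel r" using cr by (rule Card_order_wo_rel)
  have "\<not> cofinal K r" using reg K lt unfolding regularCard_def
    by (force dest: not_ordLess_ordIso)
  then obtain a where a: "a \<in> Field r" and na: "\<forall>l\<in>K. \<not> (a \<noteq> l \<and> (a, l) \<in> r)"
    unfolding cofinal_def by auto
  have ka: "\<forall>l\<in>K. (l, a) \<in> r"
    using wo_rel.in_notinI[OF r _ _ a] na K by blast
  obtain b where b: "b \<in> Field r" "a \<noteq> b" "(a,b) \<in> r"
    using infinite_Card_order_limit[OF cr inf a] by blast
  show ?thesis
  proof (intro bexI[OF _ b(1)] ballI conjI)
    fix k assume k: "k \<in> K"
    show "(k,b) \<in> r" using ka k b wo_rel.TRANS[OF r] unfolding trans_def by blast
    show "k \<noteq> b" using ka k b wo_rel.ANTISYM[OF r] unfolding antisym_def by blast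
  qed
qed

definition ns :: "nat \<Rightarrow> 'g::linordered_ab_group_add \<Rightarrow> 'g" where
  "ns n x = (\<Sum>i<n. x)"

lemma ns_add: "ns (a + b) x = ns a x + ns b x"
  by (induction a) (auto simp: ns_def algebra_simps)

lemma ns_mult: "ns m (ns k x) = ns (m * k) x"
proof (induction m)
  case 0 then show ?case by (simp add: ns_def)
next
  case (Suc m)
  have "ns (Suc m) (ns k x) = ns k x + ns m (ns k x)" by (simp add: ns_def)
  also have "\<dots> = ns (k + m * k) x" using Suc by (simp add: ns_add)
  finally show ?case by simp
qed

lemma ns_mono: "x \<le> y \<Longrightarrow> ns n x \<le> ns n y"
  unfolding ns_def by (rule sum_mono) auto

lemma ns_cancel: "ns n x < ns n y \<Longrightarrow> x < y"
  using ns_mono by (metis not_le)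

lemma ns_one: "ns 1 x = x" by (simp add: ns_def)

definition R :: "'g::linordered_ab_group_add \<Rightarrow> 'g \<Rightarrow> bool" where
  "R x y \<longleftrightarrow> (\<exists>n\<ge>1. x \<le> ns n y)"

lemma R_trans: "R x y \<Longrightarrow> R y z \<Longrightarrow> R x z"
  unfolding R_def
proof (elim exE conjE)
  fix n m assume "1 \<le> n" "x \<le> ns n y" "1 \<le> m" "y \<le> ns m z"
  then have "x \<le> ns (n*m) z" using ns_mono[of y "ns m z" n] ns_mult by (metis order.trans)
  then show "\<exists>n\<ge>1. x \<le> ns n z" using \<open>1 \<le> n\<close> \<open>1 \<le> m\<close> by (intro exI[of _ "n*m"]) auto
qed

lemma arch_eq_R: "arch_eq x y \<Longrightarrow> R x y \<and> R y x"
  unfolding arch_eq_def R_def ns_def by blast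

lemma R_arch_eq: "0 < x \<Longrightarrow> 0 < y \<Longrightarrow> R x y \<Longrightarrow> R y x \<Longrightarrow> arch_eq x y"
  unfolding arch_eq_def R_def ns_def by blast

lemma R_refl: "R x x" unfolding R_def using ns_one by (metis order.refl order.refl le_numeral_extra(4))

lemma class_eq: "0 < a \<Longrightarrow> arc_class a = arc_class b \<Longrightarrow> arch_eq a b"
proof -
  assume a: "0 < a" and e: "arc_class a = arc_class b"
  have "arch_eq a a" using a R_refl R_arch_eq by blast
  then have "a \<in> arc_class a" by (simp add: arc_class_def)
  then have "a \<in> arc_class b" using e by simp
  then have "arch_eq b a" unfolding arc_class_def by simp
  then show ?thesis using arch_eq_R R_arch_eq a by (metis arch_eq_def)
qed

lemma arch_eq_class: "arch_eq u v \<Longrightarrow> arc_class u = arc_class v"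
  unfolding arc_class_def
proof (intro set_eqI iffI; simp)
  fix y assume uv: "arch_eq u v"
  have p: "0 < u" "0 < v" using uv arch_eq_def by auto
  { assume "arch_eq u y" then show "arch_eq v y"
      using uv p arch_eq_R R_arch_eq R_trans by (metis arch_eq_def) }
  { assume "arch_eq v y" then show "arch_eq u y"
      using uv p arch_eq_R R_arch_eq R_trans by (metis arch_eq_def) }
qed

lemma arc_le_bound:
  assumes "arc_le P Q" "P = arc_class a" "Q = arc_class b" "0 < a" "0 < b"
  shows "R a b"
proof -
  obtain u v where uv: "0 < u" "0 < v" "P = arc_class u" "Q = arc_class v"
    "(\<forall>n::nat. (\<Sum>i<n. u) < v) \<or> arch_eq u v" using assms(1) unfolding arc_le_def by blast
  have au: "R a u" using class_eq[of a u] assms uv arch_eq_R by metis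
  have vb: "R v b" using class_eq[of b v] assms uv arch_eq_R by metis
  have "R u v"
  proof (cases "arch_eq u v")
    case True then show ?thesis using arch_eq_R by blast
  next
    case False then have "u < v" using uv(5) ns_one[of u] unfolding ns_def by metis
    then show ?thesis unfolding R_def using ns_one by (metis order.strict_implies_order order.refl)
  qed
  then show ?thesis using au vb R_trans by blast
qed

lemma arc_le_strict:
  assumes "arc_le P Q" "P \<noteq> Q" "P = arc_class a" "Q = arc_class b" "0 < a" "0 < b"
  shows "ns n a < b"
proof -
  obtain u v where uv: "0 < u" "0 < v" "P = arc_class u" "Q = arc_class v"
    "(\<forall>n::nat. (\<Sum>i<n. u) < v) \<or> arch_eq u v" using assms(1) unfolding arc_le_def by blast
  have au: "R a u" using class_eq[of a u] assms uv arch_eq_R by metis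
  have vb: "R v b" using class_eq[of b v] assms uv arch_eq_R by metis
  have "\<not> arch_eq u v" using arch_eq_class uv assms(2) by metis
  then have lt: "\<And>n. ns n u < v" using uv(5) unfolding ns_def by blast
  obtain m1 where m1: "a \<le> ns m1 u" using au R_def by blast
  obtain m2 where m2: "v \<le> ns m2 b" "m2 \<ge> 1" using vb R_def by blast
  have "ns m2 (ns n a) \<le> ns (m2 * n * m1) u"
    using ns_mono[OF m1, of "m2*n"] ns_mult by metis
  also have "\<dots> < v" by (rule lt)
  also have "\<dots> \<le> ns m2 b" by (rule m2)
  finally show ?thesis by (rule ns_cancel)
qed

lemma half_or_min:
  fixes e :: "'g::linordered_ab_group_add"
  assumes "0 < e"
  shows "(\<exists>e'>0. e' + e' \<le> e) \<or> (\<forall>z. 0 < z \<longrightarrow> \<not> z < e)"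
proof (rule disjCI)
  assume "\<not> (\<forall>z. 0 < z \<longrightarrow> \<not> z < e)"
  then obtain z where z: "0 < z" "z < e" by blast
  show "\<exists>e'>0. e' + e' \<le> e"
  proof (cases "z + z \<le> e")
    case True then show ?thesis using z by blast
  next
    case False
    then have "(e - z) + (e - z) \<le> e" by (simp add: algebra_simps)
    moreover have "0 < e - z" using z by simp
    ultimately show ?thesis by blast
  qed
qed

lemma ball_open:
  assumes dM: "d \<in> Met X" and e: "0 < e" and x: "x \<in> topspace X"
  shows "openin X (Gball (topspace X) d x e)"
proof -
  have gm: "G_metric (topspace X) d" and op: "\<And>U. openin X U \<longleftrightarrow> U \<subseteq> topspace X \<and>
        (\<forall>x\<in>U. \<exists>e>0. Gball (topspace X) d x e \<subseteq> U)" using dM unfolding Met_def by auto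
  show ?thesis unfolding op
  proof (intro conjI ballI)
    show "Gball (topspace X) d x e \<subseteq> topspace X" unfolding Gball_def by auto
    fix y assume y: "y \<in> Gball (topspace X) d x e"
    show "\<exists>e'>0. Gball (topspace X) d y e' \<subseteq> Gball (topspace X) d x e"
    proof -
      note True = x
      show ?thesis
      proof (intro exI[of _ "e - d x y"] conjI subsetI)
        show "0 < e - d x y" using y unfolding Gball_def by simp
        fix z assume z: "z \<in> Gball (topspace X) d y (e - d x y)"
        have "d x z \<le> d x y + d y z" using gm True y z unfolding G_metric_def Gball_def by blast
        moreover have "d x y + d y z < e" using z unfolding Gball_def by (simp add: less_diff_eq add.commute)
        ultimately show "z \<in> Gball (topspace X) d x e" using z unfolding Gball_def by simp
      qed
    qed
  qed
qed

lemma sep_ball: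
  assumes dM: "d \<in> Met X" and x: "x \<in> topspace X"
    and U: "openin X U" "x \<in> U" "\<not> eventually (\<lambda>y. y \<in> U) F"
  shows "\<exists>\<epsilon>>0. \<forall>A. A \<subseteq> topspace X \<longrightarrow> eventually (\<lambda>y. y \<in> A) F \<longrightarrow>
           (\<forall>a\<in>A. \<forall>b\<in>A. d a b < \<epsilon>) \<longrightarrow> (\<forall>a\<in>A. \<not> d x a < \<epsilon>)"
proof -
  have gm: "G_metric (topspace X) d" and op: "\<And>U. openin X U \<longleftrightarrow> U \<subseteq> topspace X \<and>
        (\<forall>x\<in>U. \<exists>e>0. Gball (topspace X) d x e \<subseteq> U)" using dM unfolding Met_def by auto
  obtain e where e: "0 < e" "Gball (topspace X) d x e \<subseteq> U" using op U by blast
  have key: "\<not> (\<forall>b\<in>A. d x b < e)" if "A \<subseteq> topspace X" "eventually (\<lambda>y. y \<in> A) F" for A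
  proof
    assume "\<forall>b\<in>A. d x b < e"
    then have "A \<subseteq> U" using that(1) e(2) unfolding Gball_def by auto
    then have "eventually (\<lambda>y. y \<in> U) F" using that(2) by (auto elim: eventually_mono)
    then show False using U(3) by blast
  qed
  from half_or_min[OF e(1)] show ?thesis
  proof
    assume "\<exists>e'>0. e' + e' \<le> e"
    then obtain e' where e': "0 < e'" "e' + e' \<le> e" by blast
    show ?thesis
    proof (intro exI[of _ e'] conjI allI impI ballI e')
      fix A a assume A: "A \<subseteq> topspace X" "eventually (\<lambda>y. y \<in> A) F"
        "\<forall>a\<in>A. \<forall>b\<in>A. d a b < e'" and a: "a \<in> A"
      show "\<not> d x a < e'"
      proof
        assume xa: "d x a < e'"
        have "\<forall>b\<in>A. d x b < e"
        proof
          fix b assume b: "b \<in> A"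
          have "d x b \<le> d x a + d a b" using gm x A a b unfolding G_metric_def by blast
          also have "\<dots> < e' + e'" using xa A(3) a b by (meson add_strict_mono)
          also have "\<dots> \<le> e" by (rule e'(2))
          finally show "d x b < e" .
        qed
        then show False using key[OF A(1) A(2)] by blast
      qed
    qed
  next
    assume mn: "\<forall>z. 0 < z \<longrightarrow> \<not> z < e"
    show ?thesis
    proof (intro exI[of _ e] conjI allI impI ballI e)
      fix A a assume A: "A \<subseteq> topspace X" "eventually (\<lambda>y. y \<in> A) F"
        "\<forall>a\<in>A. \<forall>b\<in>A. d a b < e" and a: "a \<in> A"
      show "\<not> d x a < e"
      proof
        assume xa: "d x a < e"
        have "0 \<le> d x a" using gm x A a unfolding G_metric_def by blast
        then have "d x a = 0" using mn xa by (metis order.not_eq_order_implies_strict)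
        then have "x = a" using gm x A a unfolding G_metric_def by blast
        then have "\<forall>b\<in>A. d x b < e" using A(3) a by blast
        then show False using key[OF A(1) A(2)] by blast
      qed
    qed
  qed
qed

theorem lemma2p61:
  fixes X :: "'x topology" and \<kappa> :: "'c rel"
    and d0 :: "'x \<Rightarrow> 'x \<Rightarrow> 'k::linordered_ab_group_add" and mu :: "'l rel"
    and d1 :: "'x \<Rightarrow> 'x \<Rightarrow> 'h::linordered_ab_group_add"
  assumes gauge_chi: "chi_Arc_is TYPE('k) mu" and gauge_inf: "(natLeq, mu) \<in> ordLeq"
    and gauge_met: "d0 \<in> Met X"
    and reg: "Cinfinite \<kappa>" "regularCard \<kappa>"
    and MG_chi: "chi_Arc_is TYPE('h) \<kappa>" and MG_met: "d1 \<in> Met X"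
    and G: "chi_Arc_is TYPE('g::linordered_ab_group_add) \<kappa>"
    and fc: "finally_compact X \<kappa>"
  shows "\<forall>d::'x \<Rightarrow> 'x \<Rightarrow> 'g. d \<in> Met X \<longrightarrow> G_complete X d"
proof (intro allI impI)
  fix d :: "'x \<Rightarrow> 'x \<Rightarrow> 'g" assume dM: "d \<in> Met X"
  have gm: "G_metric (topspace X) d" using dM unfolding Met_def by auto
  show "G_complete X d" unfolding G_complete_def
  proof (intro allI impI)
    fix F assume C: "Cauchy_filter X d F"
    have Fnb: "F \<noteq> bot" and Ftop: "F \<le> principal (topspace X)"
      and Cy: "\<forall>e>0. \<exists>A. eventually (\<lambda>x. x\<in>A) F \<and> (\<forall>x\<in>A. \<forall>y\<in>A. d x y < e)"
      using C unfolding Cauchy_filter_def by auto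
    show "\<exists>x. limitin X id x F"
    proof (rule ccontr)
      assume nl: "\<not> (\<exists>x. limitin X id x F)"
      have "\<forall>x\<in>topspace X. \<exists>\<epsilon>>0. \<forall>A. A \<subseteq> topspace X \<longrightarrow> eventually (\<lambda>y. y \<in> A) F \<longrightarrow>
           (\<forall>a\<in>A. \<forall>b\<in>A. d a b < \<epsilon>) \<longrightarrow> (\<forall>a\<in>A. \<not> d x a < \<epsilon>)"
      proof
        fix x assume x: "x \<in> topspace X"
        then obtain U where "openin X U" "x \<in> U" "\<not> eventually (\<lambda>y. y \<in> U) F"
          using nl unfolding limitin_def by auto
        then show "\<exists>\<epsilon>>0. \<forall>A. A \<subseteq> topspace X \<longrightarrow> eventually (\<lambda>y. y \<in> A) F \<longrightarrow>
           (\<forall>a\<in>A. \<forall>b\<in>A. d a b < \<epsilon>) \<longrightarrow> (\<forall>a\<in>A. \<not> d x a < \<epsilon>)"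
          using sep_ball[OF dM x] by blast
      qed
      then have "\<exists>\<epsilon>. \<forall>x\<in>topspace X. 0 < \<epsilon> x \<and> (\<forall>A. A \<subseteq> topspace X \<longrightarrow> eventually (\<lambda>y. y \<in> A) F \<longrightarrow>
           (\<forall>a\<in>A. \<forall>b\<in>A. d a b < \<epsilon> x) \<longrightarrow> (\<forall>a\<in>A. \<not> d x a < \<epsilon> x))"
        by (rule bchoice)
      then obtain \<epsilon> where \<epsilon>: "\<forall>x\<in>topspace X. 0 < \<epsilon> x \<and> (\<forall>A. A \<subseteq> topspace X \<longrightarrow> eventually (\<lambda>y. y \<in> A) F \<longrightarrow>
           (\<forall>a\<in>A. \<forall>b\<in>A. d a b < \<epsilon> x) \<longrightarrow> (\<forall>a\<in>A. \<not> d x a < \<epsilon> x))"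
        by (elim exE)
      define \<U> where "\<U> = (\<lambda>x. Gball (topspace X) d x (\<epsilon> x)) ` topspace X"
      have Uo: "\<forall>U\<in>\<U>. openin X U" unfolding \<U>_def using ball_open[OF dM] \<epsilon> by blast
      have Uc: "topspace X \<subseteq> \<Union>\<U>"
      proof
        fix x assume x: "x \<in> topspace X"
        have "d x x = 0" using gm x unfolding G_metric_def by blast
        then have "x \<in> Gball (topspace X) d x (\<epsilon> x)" using x \<epsilon> unfolding Gball_def by auto
        then show "x \<in> \<Union>\<U>" using x unfolding \<U>_def by blast
      qed
      obtain \<V> where V: "\<V> \<subseteq> \<U>" "topspace X \<subseteq> \<Union>\<V>" "|\<V>| <o \<kappa>"
        using fc[unfolded finally_compact_def, rule_format, OF conjI[OF Uo Uc]] by (elim exE conjE)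
      have "\<forall>V\<in>\<V>. \<exists>x. x \<in> topspace X \<and> V = Gball (topspace X) d x (\<epsilon> x)"
        using V(1) unfolding \<U>_def by blast
      then have "\<exists>c. \<forall>V\<in>\<V>. c V \<in> topspace X \<and> V = Gball (topspace X) d (c V) (\<epsilon> (c V))" by (rule bchoice)
      then obtain c where c: "\<forall>V\<in>\<V>. c V \<in> topspace X \<and> V = Gball (topspace X) d (c V) (\<epsilon> (c V))"
        by (elim exE)
      have chi: "Card_order \<kappa>" "coinitial_family (Arc :: 'g set set) arc_le \<kappa>"
        using G unfolding chi_Arc_is_def chi_is_def by auto
      then obtain s :: "'c \<Rightarrow> 'g set" where s: "s ` Field \<kappa> \<subseteq> Arc"
        "\<forall>\<alpha> \<beta>. (\<alpha>, \<beta>) \<in> \<kappa> \<and> \<alpha> \<noteq> \<beta> \<longrightarrow> arc_le (s \<beta>) (s \<alpha>) \<and> s \<beta> \<noteq> s \<alpha>"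
        "\<forall>t\<in>Arc. \<exists>\<alpha>\<in>Field \<kappa>. arc_le (s \<alpha>) t"
        unfolding coinitial_family_def by blast
      have tA: "arc_class (\<epsilon> (c V)) \<in> Arc" if "V \<in> \<V>" for V
        using that c \<epsilon> unfolding Arc_def by blast
      have "\<forall>V\<in>\<V>. \<exists>\<alpha>. \<alpha> \<in> Field \<kappa> \<and> arc_le (s \<alpha>) (arc_class (\<epsilon> (c V)))"
        using tA s(3) by blast
      then have "\<exists>\<alpha>. \<forall>V\<in>\<V>. \<alpha> V \<in> Field \<kappa> \<and> arc_le (s (\<alpha> V)) (arc_class (\<epsilon> (c V)))" by (rule bchoice)
      then obtain \<alpha> where \<alpha>: "\<forall>V\<in>\<V>. \<alpha> V \<in> Field \<kappa> \<and> arc_le (s (\<alpha> V)) (arc_class (\<epsilon> (c V)))"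
        by (elim exE)
      have h1: "|\<alpha> ` \<V>| <o \<kappa>" by (rule ordLeq_ordLess_trans[OF card_of_image V(3)])
      have h2: "\<alpha> ` \<V> \<subseteq> Field \<kappa>" using \<alpha> by blast
      have h3: "infinite (Field \<kappa>)" using reg(1) unfolding cinfinite_def by blast
      obtain b where b: "b \<in> Field \<kappa>" "\<forall>k\<in>\<alpha> ` \<V>. (k,b) \<in> \<kappa> \<and> k \<noteq> b"
        using bound_above[OF chi(1) h3 reg(2) h2 h1] by (elim bexE)
      have "s b \<in> Arc" using s(1) b(1) by blast
      then obtain \<delta> where \<delta>: "0 < \<delta>" "s b = arc_class \<delta>" unfolding Arc_def by blast
      have \<delta>lt: "\<delta> < \<epsilon> (c V)" if V: "V \<in> \<V>" for V
      proof -
        have "s (\<alpha> V) \<in> Arc" using s(1) \<alpha> V by blast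
        then obtain \<gamma> where \<gamma>: "0 < \<gamma>" "s (\<alpha> V) = arc_class \<gamma>" unfolding Arc_def by blast
        have st: "arc_le (s b) (s (\<alpha> V))" "s b \<noteq> s (\<alpha> V)" using s(2) b(2) V by blast+
        have ep: "0 < \<epsilon> (c V)" using \<epsilon> c V by blast
        have "R \<gamma> (\<epsilon> (c V))" using arc_le_bound[OF _ \<gamma>(2) refl \<gamma>(1) ep] \<alpha> V by blast
        then obtain M where M: "\<gamma> \<le> ns M (\<epsilon> (c V))" unfolding R_def by blast
        have "ns M \<delta> < \<gamma>" using arc_le_strict[OF st \<delta>(2) \<gamma>(2) \<delta>(1) \<gamma>(1)] .
        then have "ns M \<delta> < ns M (\<epsilon> (c V))" using M by order
        then show ?thesis by (rule ns_cancel)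
      qed
      obtain A where A: "eventually (\<lambda>x. x\<in>A) F" "\<forall>x\<in>A. \<forall>y\<in>A. d x y < \<delta>"
        using Cy \<delta>(1) by blast
      define A' where "A' = A \<inter> topspace X"
      have evt: "eventually (\<lambda>x. x \<in> topspace X) F" using Ftop by (simp add: le_principal)
      have A'ev: "eventually (\<lambda>x. x\<in>A') F" unfolding A'_def using eventually_conj[OF A(1) evt] by simp
      have "A' \<noteq> {}"
      proof
        assume "A' = {}"
        then have "eventually (\<lambda>x. False) F" using A'ev by simp
        then show False using Fnb by (simp add: eventually_False)
      qed
      then obtain a where a: "a \<in> A'" by blast
      then obtain V where V': "V \<in> \<V>" "a \<in> V" using V(2) unfolding A'_def by blast
      have "d (c V) a < \<epsilon> (c V)" using c V' unfolding Gball_def by blast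
      moreover have "\<forall>x\<in>A'. \<forall>y\<in>A'. d x y < \<epsilon> (c V)"
        using A(2) \<delta>lt[OF V'(1)] unfolding A'_def by (meson IntD1 order.strict_trans)
      moreover have "A' \<subseteq> topspace X" unfolding A'_def by blast
      moreover have cV: "c V \<in> topspace X" using c V'(1) by blast
      then have Q: "\<forall>A. A \<subseteq> topspace X \<longrightarrow> eventually (\<lambda>y. y \<in> A) F \<longrightarrow>
           (\<forall>a\<in>A. \<forall>b\<in>A. d a b < \<epsilon> (c V)) \<longrightarrow> (\<forall>a\<in>A. \<not> d (c V) a < \<epsilon> (c V))"
        using \<epsilon> by blast
      ultimately show False using Q[rule_format, OF _ A'ev _ a] by blast
    qed
  qed
qed

end
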